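(* Let $T$ be a tree with $n$ vertices. Then there exists a category system $\mathcal S$ on the vertex set of $T$ such that the greedy category-based routing strategy ROUTING correctly routes messages between all pairs of vertices of $T$ and $\operatorname{memdim}(\mathcal S)=O\big((\operatorname{diam}(T)+\log n)^2\big)$.
   Context: A category system for a graph with vertex set $U$ is a family $\mathcal S\subset 2^U$. For $u\in U$ let $\mathrm{cat}(u)=\{C\in\mathcal S: u\in C\}$; the membership dimension is $\operatorname{memdim}(\mathcal S)=\max_{u\in U}|\mathrm{cat}(u)|$. For $s,t\in U$ define $d(s,t)=|\mathrm{cat}(t)\setminus \mathrm{cat}(s)|$. $N(u)$ is the set of neighbors of $u$, and $\operatorname{diam}$ is the maximum shortest-path distance between two vertices. ROUTING: a node $u$ holding a message for destination $w\neq u$ forwards it to a neighbor $v\in N(u)$ with $d(v,w)<d(u,w)$. ROUTING correctly routes messages between all pairs of vertices if for every ordered pair of distinct vertices $u,w$ there is a neighbor $v\in N(u)$ with $d(v,w)<d(u,w)$. *)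

theory Defs
  imports Complex_Main
begin

definition is_walk :: "('a \<Rightarrow> 'a \<Rightarrow> bool) \<Rightarrow> 'a set \<Rightarrow> 'a list \<Rightarrow> bool" where
  "is_walk E V xs \<longleftrightarrow> xs \<noteq> [] \<and> set xs \<subseteq> V \<and> (\<forall>i. Suc i < length xs \<longrightarrow> E (xs ! i) (xs ! Suc i))"

definition graph_connected :: "'a set \<Rightarrow> ('a \<Rightarrow> 'a \<Rightarrow> bool) \<Rightarrow> bool" where
  "graph_connected V E \<longleftrightarrow> (\<forall>u\<in>V. \<forall>v\<in>V. \<exists>xs. is_walk E V xs \<and> hd xs = u \<and> last xs = v)"

definition has_cycle :: "'a set \<Rightarrow> ('a \<Rightarrow> 'a \<Rightarrow> bool) \<Rightarrow> bool" where
  "has_cycle V E \<longleftrightarrow> (\<exists>xs. is_walk E V xs \<and> distinct xs \<and> length xs \<ge> 3 \<and> E (last xs) (hd xs))"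

definition is_tree :: "'a set \<Rightarrow> ('a \<Rightarrow> 'a \<Rightarrow> bool) \<Rightarrow> bool" where
  "is_tree V E \<longleftrightarrow> finite V \<and> V \<noteq> {} \<and>
     (\<forall>u v. E u v \<longrightarrow> u \<in> V \<and> v \<in> V) \<and> (\<forall>u v. E u v \<longrightarrow> E v u) \<and> (\<forall>u. \<not> E u u) \<and>
     graph_connected V E \<and> \<not> has_cycle V E"

definition graph_dist :: "'a set \<Rightarrow> ('a \<Rightarrow> 'a \<Rightarrow> bool) \<Rightarrow> 'a \<Rightarrow> 'a \<Rightarrow> nat" where
  "graph_dist V E u v = (LEAST k. \<exists>xs. is_walk E V xs \<and> hd xs = u \<and> last xs = v \<and> length xs = Suc k)"

definition graph_diam :: "'a set \<Rightarrow> ('a \<Rightarrow> 'a \<Rightarrow> bool) \<Rightarrow> nat" where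
  "graph_diam V E = Max {graph_dist V E u v | u v. u \<in> V \<and> v \<in> V}"

definition cat :: "'a set set \<Rightarrow> 'a \<Rightarrow> 'a set set" where
  "cat S u = {C \<in> S. u \<in> C}"

definition memdim :: "'a set set \<Rightarrow> 'a set \<Rightarrow> nat" where
  "memdim S U = Max ((\<lambda>u. card (cat S u)) ` U)"

definition catdist :: "'a set set \<Rightarrow> 'a \<Rightarrow> 'a \<Rightarrow> nat" where
  "catdist S s t = card (cat S t - cat S s)"

definition routes_correctly :: "'a set set \<Rightarrow> 'a set \<Rightarrow> ('a \<Rightarrow> 'a \<Rightarrow> bool) \<Rightarrow> bool" where
  "routes_correctly S V E \<longleftrightarrow>
     (\<forall>u\<in>V. \<forall>w\<in>V. u \<noteq> w \<longrightarrow> (\<exists>v. E u v \<and> catdist S v w < catdist S u w))"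

end

theory Submission imports Defs begin

lemma bits_differ:
  fixes a b :: nat
  assumes "a < 2^K" "b < 2^K" "a \<noteq> b"
  shows "\<exists>t<K. bit a t \<noteq> bit b t"
proof (rule ccontr)
  assume "\<not> ?thesis"
  hence "\<forall>t. bit (take_bit K a) t = bit (take_bit K b) t"
    by (auto simp: bit_take_bit_iff)
  hence "take_bit K a = take_bit K b" by (simp add: bit_eq_iff)
  thus False using assms by (simp add: take_bit_nat_eq_self)
qed

lemma walk_single: "x \<in> V \<Longrightarrow> is_walk E V [x]"
  by (simp add: is_walk_def)

lemma walk_snoc:
  assumes "is_walk E V zs" "E (last zs) x" "x \<in> V"
  shows "is_walk E V (zs @ [x])"
  using assms unfolding is_walk_def
  apply (auto simp: nth_append)
  by (metis Suc_lessI last_conv_nth length_greater_0_conv diff_Suc_1)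

lemma walk_butlast:
  assumes "is_walk E V xs" "length xs \<ge> 2"
  shows "is_walk E V (butlast xs)"
  using assms unfolding is_walk_def
  apply (auto simp: nth_butlast dest: in_set_butlastD)
  using length_butlast[of xs] by auto

lemma dist_exists:
  assumes "graph_connected V E" "u \<in> V" "v \<in> V"
  shows "\<exists>xs. is_walk E V xs \<and> hd xs = u \<and> last xs = v \<and> length xs = Suc (graph_dist V E u v)"
proof -
  obtain xs where xs: "is_walk E V xs" "hd xs = u" "last xs = v"
    using assms unfolding graph_connected_def by blast
  hence "\<exists>k xs. is_walk E V xs \<and> hd xs = u \<and> last xs = v \<and> length xs = Suc k"
    unfolding is_walk_def by (intro exI[of _ "length xs - 1"] exI[of _ xs]) auto
  thus ?thesis unfolding graph_dist_def by (rule LeastI_ex)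
qed

lemma dist_le:
  assumes "is_walk E V xs" "hd xs = u" "last xs = v"
  shows "graph_dist V E u v \<le> length xs - 1"
  unfolding graph_dist_def
  apply (rule Least_le)
  using assms unfolding is_walk_def by (intro exI[of _ xs]) auto

lemma dist_self: "u \<in> V \<Longrightarrow> graph_dist V E u u = 0"
  using dist_le[of E V "[u]" u u] walk_single[of u V E] by simp

lemma dist_zero:
  assumes "graph_connected V E" "u \<in> V" "v \<in> V" "graph_dist V E u v = 0"
  shows "u = v"
proof -
  obtain xs where "is_walk E V xs" "hd xs = u" "last xs = v" "length xs = 1"
    using dist_exists[OF assms(1-3)] assms(4) by auto
  thus ?thesis by (cases xs) auto
qed

lemma parent_exists:
  assumes conn: "graph_connected V E" and sym: "\<forall>a b. E a b \<longrightarrow> E b a"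
    and c: "c \<in> V" and x: "x \<in> V" "x \<noteq> c"
  shows "\<exists>y. y \<in> V \<and> E x y \<and> graph_dist V E c y = graph_dist V E c x - 1"
proof -
  define k where "k = graph_dist V E c x"
  obtain xs where xs: "is_walk E V xs" "hd xs = c" "last xs = x" "length xs = Suc k"
    using dist_exists[OF conn c x(1)] k_def by auto
  have k1: "k \<ge> 1"
    using dist_zero[OF conn c x(1)] x(2) k_def by fastforce
  define y where "y = xs ! (k - 1)"
  have ys: "is_walk E V (butlast xs)" using walk_butlast[OF xs(1)] xs(4) k1 by simp
  have hy: "hd (butlast xs) = c" using xs k1
    by (cases xs) auto
  have bl: "length (butlast xs) = k" using xs(4) by simp
  hence bne: "butlast xs \<noteq> []" using k1 by (metis list.size(3) not_one_le_zero)
  have ly: "last (butlast xs) = y" unfolding y_def using bl bne k1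
    by (simp add: last_conv_nth nth_butlast)
  have yV: "y \<in> V" using xs(1) xs(4) k1 unfolding y_def is_walk_def by auto
  have lx: "xs ! k = x" using xs(3) xs(4) last_conv_nth[of xs] by (cases "xs = []") auto
  have "Suc (k-1) < length xs" using xs(4) k1 by simp
  hence "E (xs!(k-1)) (xs!Suc(k-1))" using xs(1) unfolding is_walk_def by blast
  hence Eyx: "E y x" using k1 lx unfolding y_def by simp
  have d1: "graph_dist V E c y \<le> k - 1"
    using dist_le[OF ys hy ly] xs(4) by simp
  obtain zs where zs: "is_walk E V zs" "hd zs = c" "last zs = y" "length zs = Suc (graph_dist V E c y)"
    using dist_exists[OF conn c yV] by auto
  have "is_walk E V (zs @ [x])" using walk_snoc[OF zs(1)] zs(3) Eyx x by simp
  moreover have "hd (zs @ [x]) = c" using zs by (cases zs) auto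
  ultimately have "k \<le> length (zs @ [x]) - 1" using dist_le k_def by fastforce
  hence "k \<le> graph_dist V E c y + 1" using zs(4) by simp
  thus ?thesis using d1 yV Eyx sym k_def by (intro exI[of _ y]) auto
qed

lemma dist_le_diam:
  assumes "finite V" "u \<in> V" "v \<in> V"
  shows "graph_dist V E u v \<le> graph_diam V E"
proof -
  have "{graph_dist V E u v | u v. u \<in> V \<and> v \<in> V} = (\<lambda>(u,v). graph_dist V E u v) ` (V \<times> V)"
    by auto
  hence "finite {graph_dist V E u v | u v. u \<in> V \<and> v \<in> V}" using assms by simp
  thus ?thesis unfolding graph_diam_def using assms by (intro Max_ge) auto
qed


locale rt =
  fixes V :: "'a set" and E :: "'a \<Rightarrow> 'a \<Rightarrow> bool" and c :: 'a
    and idf :: "'a \<Rightarrow> nat" and K :: nat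
  assumes fin: "finite V" and cV: "c \<in> V" and sym: "\<forall>a b. E a b \<longrightarrow> E b a"
    and conn: "graph_connected V E" and inj: "inj_on idf V"
    and idb: "\<forall>x\<in>V. idf x < 2^K"
begin

definition depth where "depth x = graph_dist V E c x"
definition par where
  "par x = (if x = c then c else SOME y. y \<in> V \<and> E x y \<and> depth y = depth x - 1)"
definition anc where "anc r x = (par ^^ (depth x - r)) x"
definition Sub where "Sub y = {x\<in>V. depth y \<le> depth x \<and> anc (depth y) x = y}"
definition Y where "Y r t b = {x\<in>V. depth x < r \<or> bit (idf (anc r x)) t \<noteq> b}"
definition D where "D = graph_diam V E"
definition SS where
  "SS = Sub ` (V - {c}) \<union> (\<lambda>(r,t,b). Y r t b) ` ({1..D} \<times> {..<K} \<times> (UNIV::bool set))"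

lemma depth_c: "depth c = 0" unfolding depth_def using dist_self cV by metis

lemma depth0: "x \<in> V \<Longrightarrow> depth x = 0 \<Longrightarrow> x = c"
  unfolding depth_def using dist_zero[OF conn cV] by metis

lemma depth_le: "x \<in> V \<Longrightarrow> depth x \<le> D"
  unfolding depth_def D_def using dist_le_diam[OF fin cV] by metis

lemma par_props: "x \<in> V \<Longrightarrow> par x \<in> V \<and> depth (par x) = depth x - 1 \<and> (x \<noteq> c \<longrightarrow> E x (par x))"
proof (cases "x = c")
  case True thus ?thesis using cV depth_c by (simp add: par_def)
next
  case False
  assume x: "x \<in> V"
  have "\<exists>y. y \<in> V \<and> E x y \<and> depth y = depth x - 1"
    using parent_exists[OF conn sym cV x False] unfolding depth_def by blast
  from someI_ex[OF this] show ?thesis using False by (simp add: par_def)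
qed

lemma iter_props: "x \<in> V \<Longrightarrow> (par^^k) x \<in> V \<and> depth ((par^^k) x) = depth x - k"
  by (induction k) (auto simp: par_props)

lemma anc_V: "x \<in> V \<Longrightarrow> anc r x \<in> V"
  unfolding anc_def using iter_props by blast

lemma anc_depth: "x \<in> V \<Longrightarrow> r \<le> depth x \<Longrightarrow> depth (anc r x) = r"
  unfolding anc_def using iter_props by simp

lemma anc_self: "anc (depth x) x = x" unfolding anc_def by simp

lemma anc_par: "x \<in> V \<Longrightarrow> r < depth x \<Longrightarrow> anc r (par x) = anc r x"
proof -
  assume x: "x \<in> V" "r < depth x"
  have "depth (par x) = depth x - 1" using par_props x by blast
  hence "anc r (par x) = (par ^^ (depth x - 1 - r)) (par x)" unfolding anc_def by simp
  also have "\<dots> = (par ^^ Suc (depth x - 1 - r)) x" by (simp add: funpow_Suc_right del: funpow.simps)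
  also have "Suc (depth x - 1 - r) = depth x - r" using x by simp
  finally show ?thesis unfolding anc_def .
qed

lemma anc_anc: "x \<in> V \<Longrightarrow> r \<le> s \<Longrightarrow> s \<le> depth x \<Longrightarrow> anc r (anc s x) = anc r x"
proof -
  assume x: "x \<in> V" "r \<le> s" "s \<le> depth x"
  have "depth (anc s x) = s" using anc_depth x by simp
  hence "anc r (anc s x) = (par ^^ (s - r)) ((par ^^ (depth x - s)) x)" unfolding anc_def by simp
  also have "\<dots> = (par ^^ (s - r + (depth x - s))) x" by (simp add: funpow_add)
  also have "s - r + (depth x - s) = depth x - r" using x by simp
  finally show ?thesis unfolding anc_def .
qed

lemma par_anc: "x \<in> V \<Longrightarrow> r < depth x \<Longrightarrow> par (anc (Suc r) x) = anc r x"
proof -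
  assume x: "x \<in> V" "r < depth x"
  have "par (anc (Suc r) x) = (par ^^ Suc (depth x - Suc r)) x" unfolding anc_def by simp
  also have "Suc (depth x - Suc r) = depth x - r" using x by simp
  finally show ?thesis unfolding anc_def .
qed

lemma anc0: "x \<in> V \<Longrightarrow> anc 0 x = c"
  using anc_depth[of x 0] anc_V[of x 0] depth0 by simp

lemma SS_fin: "finite SS" unfolding SS_def using fin by simp

lemma SS_pow: "SS \<subseteq> Pow V" unfolding SS_def Sub_def Y_def by auto

lemma catdist_lt:
  assumes "\<forall>C\<in>SS. u\<in>C \<and> w\<in>C \<longrightarrow> v\<in>C" "\<exists>C\<in>SS. w\<in>C \<and> v\<in>C \<and> u\<notin>C"
  shows "catdist SS v w < catdist SS u w"
proof -
  have "cat SS w - cat SS v \<subset> cat SS w - cat SS u"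
    using assms unfolding cat_def by auto
  moreover have "finite (cat SS w - cat SS u)" using SS_fin unfolding cat_def by simp
  ultimately show ?thesis unfolding catdist_def by (rule psubset_card_mono[rotated])
qed

lemma routing: "routes_correctly SS V E"
  unfolding routes_correctly_def
proof (intro ballI impI)
  fix u w assume u: "u \<in> V" and w: "w \<in> V" and uw: "u \<noteq> w"
  show "\<exists>v. E u v \<and> catdist SS v w < catdist SS u w"
  proof (cases "depth u \<le> depth w \<and> anc (depth u) w = u")
    case True
    have lt: "depth u < depth w" using True uw anc_self by (metis le_neq_implies_less)
    define v where "v = anc (Suc (depth u)) w"
    have vV: "v \<in> V" unfolding v_def using anc_V w by blast
    have dv: "depth v = Suc (depth u)" unfolding v_def using anc_depth w lt by simp
    have pv: "par v = u" unfolding v_def using par_anc[OF w lt] True by simp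
    have vc: "v \<noteq> c" using dv depth_c by auto
    have Evu: "E v u" using par_props[OF vV] vc pv by simp
    have "catdist SS v w < catdist SS u w"
    proof (rule catdist_lt)
      show "\<forall>C\<in>SS. u\<in>C \<and> w\<in>C \<longrightarrow> v\<in>C"
      proof (intro ballI impI)
        fix C assume C: "C \<in> SS" "u \<in> C \<and> w \<in> C"
        show "v \<in> C"
        proof (cases "C \<in> Sub ` (V - {c})")
          case True
          then obtain y where y: "C = Sub y" by blast
          have "depth y \<le> depth u" "anc (depth y) w = y" using C y unfolding Sub_def by auto
          moreover have "anc (depth y) v = anc (depth y) w"
            unfolding v_def using anc_anc[OF w] dv lt \<open>depth y \<le> depth u\<close> v_def by simp
          ultimately show ?thesis using y vV dv unfolding Sub_def by simp
        next
          case False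
          then obtain r t b where Cd: "C = Y r t b" using C unfolding SS_def by auto
          show ?thesis
          proof (cases "depth v < r")
            case True thus ?thesis using vV Cd unfolding Y_def by simp
          next
            case False
            hence rle: "r \<le> Suc (depth u)" using dv by simp
            have "anc r v = anc r w" unfolding v_def using anc_anc[OF w rle] lt by simp
            moreover have "\<not> depth w < r" using False dv lt by simp
            ultimately show ?thesis using C Cd vV unfolding Y_def by auto
          qed
        qed
      qed
      show "\<exists>C\<in>SS. w\<in>C \<and> v\<in>C \<and> u\<notin>C"
      proof (intro bexI conjI)
        show "Sub v \<in> SS" unfolding SS_def using vV vc by blast
        show "w \<in> Sub v" unfolding Sub_def using w dv lt v_def by simp
        show "v \<in> Sub v" unfolding Sub_def using vV anc_self by simp
        show "u \<notin> Sub v" unfolding Sub_def using dv by simp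
      qed
    qed
    moreover have "E u v" using Evu sym by blast
    ultimately show ?thesis by blast
  next
    case False
    have uc: "u \<noteq> c" using False anc0[OF w] depth_c by auto
    define v where "v = par u"
    have vV: "v \<in> V" and dv: "depth v = depth u - 1" and Euv: "E u v"
      using par_props[OF u] uc unfolding v_def by auto
    have du: "depth u \<ge> 1" using depth0 u uc by (metis less_one not_less)
    have "catdist SS v w < catdist SS u w"
    proof (rule catdist_lt)
      show "\<forall>C\<in>SS. u\<in>C \<and> w\<in>C \<longrightarrow> v\<in>C"
      proof (intro ballI impI)
        fix C assume C: "C \<in> SS" "u \<in> C \<and> w \<in> C"
        show "v \<in> C"
        proof (cases "C \<in> Sub ` (V - {c})")
          case True
          then obtain y where y: "C = Sub y" by blast
          have yu: "depth y \<le> depth u" "anc (depth y) u = y" "depth y \<le> depth w" "anc (depth y) w = y"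
            using C y unfolding Sub_def by auto
          have "depth y \<noteq> depth u" using yu False anc_self by metis
          hence lt: "depth y < depth u" using yu by simp
          hence "anc (depth y) v = y" unfolding v_def using anc_par[OF u lt] yu by simp
          thus ?thesis using y vV dv lt unfolding Sub_def by simp
        next
          case False
          then obtain r t b where Cd: "C = Y r t b" using C unfolding SS_def by auto
          show ?thesis
          proof (cases "depth v < r")
            case True thus ?thesis using vV Cd unfolding Y_def by simp
          next
            case False
            hence "r < depth u" using dv du by simp
            hence "anc r v = anc r u" unfolding v_def using anc_par[OF u] by simp
            moreover have "\<not> depth u < r" using False dv du by simp
            ultimately show ?thesis using C Cd vV unfolding Y_def by auto
          qed
        qed
      qed
      have "\<exists>t<K. bit (idf (anc (depth u) w)) t \<noteq> bit (idf u) t \<or> depth w < depth u"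
      proof (cases "depth w < depth u")
        case True
        obtain t where "t < K" using bits_differ[of "idf u" K "idf w"] idb inj u w uw
          by (meson inj_on_contraD)
        thus ?thesis using True by blast
      next
        case ge: False
        have "anc (depth u) w \<noteq> u" using False ge by simp
        hence "idf (anc (depth u) w) \<noteq> idf u" using inj anc_V[OF w] u by (meson inj_on_contraD)
        then obtain t where "t < K" "bit (idf (anc (depth u) w)) t \<noteq> bit (idf u) t"
          using bits_differ[of "idf (anc (depth u) w)" K "idf u"] idb anc_V[OF w] u by blast
        thus ?thesis by blast
      qed
      then obtain t where t: "t < K" "bit (idf (anc (depth u) w)) t \<noteq> bit (idf u) t \<or> depth w < depth u"
        by blast
      show "\<exists>C\<in>SS. w\<in>C \<and> v\<in>C \<and> u\<notin>C"
      proof (intro bexI conjI)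
        show "Y (depth u) t (bit (idf u) t) \<in> SS" unfolding SS_def using t du depth_le[OF u] by force
        show "w \<in> Y (depth u) t (bit (idf u) t)" unfolding Y_def using w t by auto
        show "v \<in> Y (depth u) t (bit (idf u) t)" unfolding Y_def using vV dv du by auto
        show "u \<notin> Y (depth u) t (bit (idf u) t)" unfolding Y_def using anc_self by simp
      qed
    qed
    thus ?thesis using Euv by blast
  qed
qed

lemma cat_bound: "x \<in> V \<Longrightarrow> card (cat SS x) \<le> D + D * K * 2"
proof -
  assume x: "x \<in> V"
  let ?Ys = "(\<lambda>(r,t,b). Y r t b) ` ({1..D} \<times> {..<K} \<times> (UNIV::bool set))"
  have "cat SS x \<subseteq> (\<lambda>r. Sub (anc r x)) ` {1..D} \<union> ?Ys"
  proof
    fix C assume C: "C \<in> cat SS x"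
    show "C \<in> (\<lambda>r. Sub (anc r x)) ` {1..D} \<union> ?Ys"
    proof (cases "C \<in> ?Ys")
      case False
      then obtain y where y: "y \<in> V" "y \<noteq> c" "C = Sub y" using C unfolding cat_def SS_def by auto
      have "x \<in> Sub y" using C y unfolding cat_def by simp
      hence "anc (depth y) x = y" by (simp add: Sub_def)
      moreover have "depth y \<ge> 1" using depth0 y by (metis less_one not_less)
      moreover have "depth y \<le> D" using depth_le y by simp
      ultimately show ?thesis using y by force
    qed simp
  qed
  hence "card (cat SS x) \<le> card ((\<lambda>r. Sub (anc r x)) ` {1..D} \<union> ?Ys)"
    by (rule card_mono[rotated]) simp
  also have "\<dots> \<le> card ((\<lambda>r. Sub (anc r x)) ` {1..D}) + card ?Ys" by (rule card_Un_le)
  also have "\<dots> \<le> D + D * K * 2"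
  proof (rule add_mono)
    show "card ((\<lambda>r. Sub (anc r x)) ` {1..D}) \<le> D"
      using card_image_le[of "{1..D}" "\<lambda>r. Sub (anc r x)"] by simp
    have "card ?Ys \<le> card ({1..D} \<times> {..<K} \<times> (UNIV::bool set))" by (rule card_image_le) simp
    thus "card ?Ys \<le> D * K * 2" by (simp add: card_cartesian_product)
  qed
  finally show ?thesis .
qed

lemma memdim_bound: "memdim SS V \<le> D + D * K * 2"
proof -
  have "V \<noteq> {}" using cV by auto
  thus ?thesis unfolding memdim_def using cat_bound fin by (subst Max_le_iff) auto
qed

end

lemma final_arith:
  fixes D K L m :: real
  assumes "m \<le> D + D*K*2" "D \<ge> 1" "L \<ge> 1" "K \<le> L + 1"
  shows "m \<le> 5 * (D + L)^2"
proof -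
  have "D*K \<le> D*(2*L)" using assms by (intro mult_left_mono) auto
  hence "m \<le> D + 4*D*L" using assms by linarith
  also have "\<dots> \<le> 5*D*L" using assms by (simp add: mult_right_mono)  
  also have "\<dots> \<le> 5 * (D + L)^2" using assms by (simp add: power2_eq_square algebra_simps)
  finally show ?thesis .
qed

theorem theorem1:
  shows "\<exists>c::real. \<forall>(V::nat set) E. is_tree V E \<longrightarrow>
           (\<exists>S. S \<subseteq> Pow V \<and> routes_correctly S V E \<and>
                real (memdim S V) \<le> c * (real (graph_diam V E) + log 2 (real (card V)))\<^sup>2)"
proof (rule exI[of _ 5], intro allI impI)
  fix V :: "nat set" and E assume T: "is_tree V E"
  have fin: "finite V" and ne: "V \<noteq> {}" and sym: "\<forall>a b. E a b \<longrightarrow> E b a"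
    and conn: "graph_connected V E" using T unfolding is_tree_def by auto
  obtain c where cV: "c \<in> V" using ne by blast
  define n where "n = card V"
  obtain h where h: "bij_betw h {0..<n} V" using ex_bij_betw_nat_finite[OF fin] n_def by blast
  define idf where "idf = inv_into {0..<n} h"
  have bi: "bij_betw idf V {0..<n}" unfolding idf_def using h by (rule bij_betw_inv_into)
  define K where "K = (LEAST k. n \<le> 2^k)"
  have nK: "n \<le> 2^K" unfolding K_def by (rule LeastI[of _ n]) simp
  have idb: "\<forall>x\<in>V. idf x < 2^K"
  proof
    fix x assume "x \<in> V"
    hence "idf x \<in> {0..<n}" using bi unfolding bij_betw_def by blast
    thus "idf x < 2^K" using nK by simp
  qed
  interpret rt V E c idf K
    using fin cV sym conn bi idb unfolding bij_betw_def by unfold_locales auto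
  have Ddef: "D = graph_diam V E" by (simp add: D_def)
  have mb: "real (memdim SS V) \<le> real D + real D * real K * 2"
    using memdim_bound by (metis of_nat_add of_nat_le_iff of_nat_mult of_nat_numeral)
  show "\<exists>S. S \<subseteq> Pow V \<and> routes_correctly S V E \<and>
                real (memdim S V) \<le> 5 * (real (graph_diam V E) + log 2 (real (card V)))\<^sup>2"
  proof (intro exI conjI)
    show "SS \<subseteq> Pow V" by (rule SS_pow)
    show "routes_correctly SS V E" by (rule routing)
    show "real (memdim SS V) \<le> 5 * (real (graph_diam V E) + log 2 (real (card V)))\<^sup>2"
    proof (cases "D = 0")
      case True thus ?thesis using mb by simp
    next
      case False
      have n2: "n \<ge> 2"
      proof (rule ccontr)
        assume "\<not> n \<ge> 2"
        hence "card V \<le> 1" using n_def by simp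
        hence V1: "V = {c}" using cV fin by (metis card_1_singletonE card_0_eq empty_iff le_neq_implies_less less_one singletonD subsetI subset_antisym insert_subset ne)
        have "\<forall>x\<in>V. depth x = 0" using V1 depth_c by simp
        have "{graph_dist V E u v | u v. u \<in> V \<and> v \<in> V} = {0}" using V1 dist_self[of c "{c}" E] by auto
        hence "D = 0" unfolding D_def graph_diam_def by simp
        thus False using False by simp
      qed
      have L1: "log 2 (real n) \<ge> 1" using le_log2_of_power[of 1 n] n2 by simp
      have K1: "K \<ge> 1" using nK n2 by (cases K) auto
      have "\<not> n \<le> 2^(K-1)" unfolding K_def
        by (rule not_less_Least) (use K1 in \<open>simp add: K_def[symmetric]\<close>)
      hence "real (K-1) < log 2 (real n)" using less_log2_of_power[of "K-1" n] by simp
      hence KL: "real K \<le> log 2 (real n) + 1" using K1 by (simp add: of_nat_diff)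
      have "real (memdim SS V) \<le> 5 * (real D + log 2 (real n))^2"
        using final_arith[OF mb _ L1 KL] False by simp
      thus ?thesis using Ddef n_def by simp
    qed
  qed
qed

end
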